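(* Let $A\in\mathbb{R}^{n\times n}$ be symmetric positive-semidefinite, $b\in\mathbb{R}^n$, $\alpha\in\mathbb{R}$, $g:\mathbb{R}^n\to(-\infty,\infty]$ proper, lower semicontinuous and convex, and $\gamma>0$ such that $I-\gamma A$ is positive-definite. Set $Q:=(I-\gamma A)^{-1}$, $c:=\gamma Qb$, $P:=Q-I$, $\psi(u):=\frac12\langle Pu,u\rangle+\langle c,u\rangle+\gamma e_\gamma g(u)$ and $\varphi(x):=\frac12\langle Ax,x\rangle+\langle b,x\rangle+\alpha+g(x)$. Then the following are equivalent for $\bar x\in\mathbb{R}^n$: (i) $\bar x$ is an optimal solution of minimizing $\varphi$ over $\mathbb{R}^n$; (ii) $\bar x=Q\bar u+c$ for some optimal solution $\bar u$ of minimizing $\psi$ over $\mathbb{R}^n$.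
   Context: Moreau envelope: $e_\gamma g(x):=\inf_y\{g(y)+\frac1{2\gamma}\|y-x\|^2\}$. *)

theory Defs
  imports "HOL-Analysis.Analysis"
begin

definition proper_fun :: "('a \<Rightarrow> ereal) \<Rightarrow> bool" where
  "proper_fun g \<longleftrightarrow> (\<forall>x. g x \<noteq> -\<infinity>) \<and> (\<exists>x. g x \<noteq> \<infinity>)"

definition lsc_fun :: "('a::topological_space \<Rightarrow> ereal) \<Rightarrow> bool" where
  "lsc_fun g \<longleftrightarrow> (\<forall>x. g x \<le> Liminf (at x) g)"

definition ereal_convex_fun :: "('a::real_vector \<Rightarrow> ereal) \<Rightarrow> bool" where
  "ereal_convex_fun g \<longleftrightarrow> convex {(x, t::real). g x \<le> ereal t}"

definition moreau_env :: "real \<Rightarrow> ('a::real_normed_vector \<Rightarrow> ereal) \<Rightarrow> 'a \<Rightarrow> ereal" where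
  "moreau_env \<gamma> g x = (INF y. g y + ereal (norm (y - x) ^ 2 / (2 * \<gamma>)))"

definition pos_semidef :: "real^'n^'n \<Rightarrow> bool" where
  "pos_semidef M \<longleftrightarrow> (\<forall>x. 0 \<le> x \<bullet> (M *v x))"

definition pos_def :: "real^'n^'n \<Rightarrow> bool" where
  "pos_def M \<longleftrightarrow> (\<forall>x. x \<noteq> 0 \<longrightarrow> 0 < x \<bullet> (M *v x))"

end

theory Submission
  imports Defs
begin

lemma ident:
  fixes A P :: "real^'n^'n" and b c s y u :: "real^'n"
  assumes symA: "\<And>x z. (A *v x) \<bullet> z = x \<bullet> (A *v z)"
    and bc: "\<gamma> * (b \<bullet> y) = c \<bullet> y - \<gamma> * ((A *v c) \<bullet> y)"
    and u: "u = s - \<gamma> *\<^sub>R (A *v s)"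
    and Pu: "P *v u = s - u"
    and d: "d = s + c - y"
  shows "1/2*((P *v u)\<bullet>u) + c\<bullet>u + norm(y-u)^2/2 = \<gamma>*(1/2*((A*v y)\<bullet>y) + b\<bullet>y + \<alpha>) + (\<gamma>/2*((A*v c)\<bullet>c) - 1/2*(c\<bullet>c) - \<gamma>*\<alpha>) + 1/2*(d \<bullet> (d - \<gamma> *\<^sub>R (A *v d)))"
proof -
  have e: "1/2*((P *v u)\<bullet>u) + c\<bullet>u + norm(y-u)^2/2 = 1/2*((s-u)\<bullet>u) + c\<bullet>u + (y-u)\<bullet>(y-u)/2" by (simp add: power2_norm_eq_inner Pu)
  show ?thesis apply (subst e) unfolding d u
    using symA[of s y] symA[of s c] symA[of c y] symA[of y s] symA[of c s] symA[of y c] bc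
    apply (simp add: inner_simps matrix_vector_mult_diff_distrib matrix_vector_right_distrib matrix_vector_mult_scaleR inner_commute algebra_simps)
    apply (simp add: field_simps)
    done
qed

lemma psi_le:
  fixes f :: "'a \<Rightarrow> ereal"
  assumes "\<gamma> > 0"
  shows "ereal r + ereal \<gamma> * (INF y. f y) \<le> ereal r + ereal \<gamma> * f y0"
proof -
  have "(INF y. f y) \<le> f y0" by (rule INF_lower) simp
  then have "ereal \<gamma> * (INF y. f y) \<le> ereal \<gamma> * f y0"
    by (rule ereal_mult_left_mono) (use assms in simp)
  then show ?thesis by (rule add_left_mono)
qed

lemma psi_ge:
  fixes f :: "'a \<Rightarrow> ereal"
  assumes g: "\<gamma> > 0" and H: "\<And>y. ereal L \<le> ereal r + ereal \<gamma> * f y"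
  shows "ereal L \<le> ereal r + ereal \<gamma> * (INF y. f y)"
proof -
  have "ereal ((L - r)/\<gamma>) \<le> f y" for y
  proof (cases "f y")
    case (real v)
    with H[of y] have "L \<le> r + \<gamma> * v" by simp
    then show ?thesis using real g by (simp add: field_simps)
  next
    case PInf then show ?thesis by simp
  next
    case MInf with H[of y] g show ?thesis by simp
  qed
  then have "ereal ((L - r)/\<gamma>) \<le> (INF y. f y)" by (rule INF_greatest)
  then have "ereal \<gamma> * ereal ((L - r)/\<gamma>) \<le> ereal \<gamma> * (INF y. f y)"
    by (rule ereal_mult_left_mono) (use g in simp)
  moreover have "ereal \<gamma> * ereal ((L - r)/\<gamma>) = ereal (L - r)" using g by simp
  ultimately have "ereal r + ereal (L - r) \<le> ereal r + ereal \<gamma> * (INF y. f y)"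
    by (metis add_left_mono)
  then show ?thesis by simp
qed

lemma mu_lemma:
  fixes M :: "real^'n^'n"
  assumes "pos_def M"
  shows "\<exists>\<mu>>0. \<forall>d. \<mu> * (norm d)^2 \<le> d \<bullet> (M *v d)"
proof -
  let ?S = "sphere (0::real^'n) 1"
  let ?f = "\<lambda>d::real^'n. d \<bullet> (M *v d)"
  have ne: "?S \<noteq> {}"
  proof -
    obtain i :: 'n where True by simp
    have "axis i (1::real) \<in> ?S" by simp
    then show ?thesis by blast
  qed
  have cont: "continuous_on ?S ?f"
    by (intro continuous_intros linear_continuous_on matrix_vector_mul_bounded_linear)
  obtain d0 where d0: "d0 \<in> ?S" "\<And>y. y \<in> ?S \<Longrightarrow> ?f d0 \<le> ?f y"
    using continuous_attains_inf[OF compact_sphere ne cont] by blast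
  have "d0 \<noteq> 0" using d0(1) by auto
  then have pos: "?f d0 > 0" using assms unfolding pos_def_def by blast
  have "?f d0 * (norm d)^2 \<le> ?f d" for d
  proof (cases "d = 0")
    case True then show ?thesis by simp
  next
    case False
    define e where "e = (1 / norm d) *\<^sub>R d"
    have eS: "e \<in> ?S" using False by (simp add: e_def)
    have de: "d = norm d *\<^sub>R e" using False by (simp add: e_def)
    have "?f d = (norm d)^2 * ?f e"
      by (subst (1 2) de) (simp add: matrix_vector_mult_scaleR power2_eq_square)
    then show ?thesis using d0(2)[OF eS] by (simp add: mult.commute mult_right_mono)
  qed
  then show ?thesis using pos by blast
qed


lemma lsc_nbhd:
  fixes g :: "'a::metric_space \<Rightarrow> ereal" and h :: "'a \<Rightarrow> real"
  assumes lsc: "lsc_fun g" and hc: "isCont h x0" and lt: "ereal t < ereal (h x0) + g x0"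
  shows "\<exists>\<delta>>0. \<forall>y. dist y x0 < \<delta> \<longrightarrow> ereal t < ereal (h y) + g y"
proof -
  have "ereal (t - h x0) < g x0" using lt by (cases "g x0") (auto simp: add.commute)
  then obtain s where s1: "ereal (t - h x0) < ereal s" and s2: "ereal s < g x0"
    using ereal_dense2 by blast
  have "g x0 \<le> Liminf (at x0) g" using lsc unfolding lsc_fun_def by blast
  then have ev1: "eventually (\<lambda>y. ereal s < g y) (at x0)"
    using s2 unfolding le_Liminf_iff by blast
  have "(h \<longlongrightarrow> h x0) (at x0)" using hc by (simp add: isCont_def)
  then have ev2: "eventually (\<lambda>y. h x0 - (s - (t - h x0)) < h y) (at x0)"
    using s1 by (intro order_tendstoD(1)) auto
  have "eventually (\<lambda>y. ereal t < ereal (h y) + g y) (at x0)"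
    using eventually_conj[OF ev1 ev2]
  proof (rule eventually_mono)
    fix y assume a: "ereal s < g y \<and> h x0 - (s - (t - h x0)) < h y"
    then show "ereal t < ereal (h y) + g y" by (cases "g y") auto
  qed
  then obtain d where d: "d > 0" "\<And>y. y \<noteq> x0 \<Longrightarrow> dist y x0 < d \<Longrightarrow> ereal t < ereal (h y) + g y"
    unfolding eventually_at by auto
  have "\<forall>y. dist y x0 < d \<longrightarrow> ereal t < ereal (h y) + g y"
  proof (intro allI impI)
    fix y assume "dist y x0 < d"
    then show "ereal t < ereal (h y) + g y" using d(2)[of y] lt by (cases "y = x0") auto
  qed
  then show ?thesis using d(1) by blast
qed

lemma convex_lb:
  fixes g :: "'a::real_normed_vector \<Rightarrow> ereal"
  assumes pr: "proper_fun g" and lsc: "lsc_fun g" and cv: "ereal_convex_fun g"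
  shows "\<exists>x0 a \<beta>. \<beta> \<ge> 0 \<and> (\<forall>y. ereal (a - \<beta> * norm (y - x0)) \<le> g y)"
proof -
  obtain x0 where x0: "g x0 \<noteq> \<infinity>" using pr unfolding proper_fun_def by blast
  have nm: "\<And>x. g x \<noteq> -\<infinity>" using pr unfolding proper_fun_def by blast
  obtain g0 where g0: "g x0 = ereal g0" using x0 nm[of x0] by (cases "g x0") auto
  have "\<exists>\<delta>>0. \<forall>y. dist y x0 < \<delta> \<longrightarrow> ereal (g0 - 1) < ereal ((\<lambda>_. 0) y) + g y"
    by (rule lsc_nbhd[OF lsc]) (auto simp: g0)
  then obtain \<delta> where dpos: "\<delta> > 0" and dn: "\<And>y. dist y x0 < \<delta> \<Longrightarrow> ereal (g0 - 1) < g y"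
    by auto
  have "ereal (g0 - 1 - (2/\<delta>) * norm (y - x0)) \<le> g y" for y
  proof (cases "norm (y - x0) < \<delta>")
    case True
    then have "ereal (g0 - 1) < g y" using dn by (simp add: dist_norm)
    moreover have "g0 - 1 - (2/\<delta>) * norm (y - x0) \<le> g0 - 1" using dpos by simp
    ultimately show ?thesis by (meson ereal_less_eq(3) order.trans less_imp_le)
  next
    case False
    show ?thesis
    proof (cases "g y = \<infinity>")
      case True then show ?thesis by simp
    next
      case False': False
      obtain gy where gy: "g y = ereal gy" using False' nm[of y] by (cases "g y") auto
      define n where "n = norm (y - x0)"
      have npos: "n \<ge> \<delta>" using False n_def by simp
      define t where "t = \<delta> / (2 * n)"
      have tpos: "t > 0" using dpos npos by (simp add: t_def)
      have tle: "t \<le> 1" using dpos npos by (simp add: t_def field_simps)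
      define z where "z = (1 - t) *\<^sub>R x0 + t *\<^sub>R y"
      let ?E = "{(x, s::real). g x \<le> ereal s}"
      have "(1 - t) *\<^sub>R (x0, g0) + t *\<^sub>R (y, gy) \<in> ?E"
        using cv unfolding ereal_convex_fun_def
        by (rule convexD) (use g0 gy tpos tle in auto)
      then have gz: "g z \<le> ereal ((1 - t) * g0 + t * gy)" by (simp add: z_def)
      have "z - x0 = t *\<^sub>R (y - x0)" by (simp add: z_def algebra_simps)
      then have "dist z x0 = t * n" using tpos by (simp add: dist_norm n_def)
      also have "\<dots> = \<delta> / 2" using npos dpos by (simp add: t_def)
      finally have "dist z x0 < \<delta>" using dpos by simp
      then have "ereal (g0 - 1) < g z" by (rule dn)
      then have "ereal (g0 - 1) < ereal ((1 - t) * g0 + t * gy)" using gz by (rule less_le_trans)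
      then have "g0 - 1 < (1 - t) * g0 + t * gy" by simp
      then have "t * g0 - 1 < t * gy" by (simp add: algebra_simps)
      then have "g0 - 1 / t < gy" using tpos by (simp add: field_simps)
      moreover have "1 / t = (2/\<delta>) * n" using dpos npos by (simp add: t_def)
      ultimately show ?thesis using gy n_def by simp
    qed
  qed
  moreover have "2/\<delta> \<ge> 0" using dpos by simp
  ultimately show ?thesis by blast
qed

lemma moreau_finite_below:
  fixes g :: "'a::real_normed_vector \<Rightarrow> ereal"
  assumes pr: "proper_fun g" and lsc: "lsc_fun g" and cv: "ereal_convex_fun g" and gp: "\<gamma> > 0"
  shows "moreau_env \<gamma> g u \<noteq> -\<infinity>"
proof -
  obtain x0 a \<beta> where b0: "\<beta> \<ge> 0" and lb: "\<And>y. ereal (a - \<beta> * norm (y - x0)) \<le> g y"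
    using convex_lb[OF pr lsc cv] by blast
  define L where "L = a - \<beta> * norm (u - x0) - \<gamma> * \<beta>^2 / 2"
  have "ereal L \<le> g y + ereal (norm (y - u) ^ 2 / (2 * \<gamma>))" for y
  proof -
    define s where "s = norm (y - u)"
    have "y - x0 = (y - u) + (u - x0)" by simp
    then have tri: "norm (y - x0) \<le> s + norm (u - x0)" unfolding s_def
      by (metis norm_triangle_ineq)
    have q: "\<beta> * s \<le> s^2 / (2*\<gamma>) + \<gamma> * \<beta>^2 / 2"
    proof -
      have "0 \<le> (s - \<gamma> * \<beta>)^2 / (2*\<gamma>)" using gp by simp
      also have "\<dots> = s^2 / (2*\<gamma>) + \<gamma> * \<beta>^2 / 2 - \<beta> * s" using gp
        by (simp add: field_simps power2_eq_square)
      finally show ?thesis by simp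
    qed
    have "L \<le> a - \<beta> * norm (y - x0) + s^2 / (2*\<gamma>)"
    proof -
      have "\<beta> * norm (y - x0) \<le> \<beta> * s + \<beta> * norm (u - x0)"
        using mult_left_mono[OF tri b0] by (simp add: distrib_left)
      then show ?thesis using q unfolding L_def by linarith
    qed
    then have "ereal L \<le> ereal (a - \<beta> * norm (y - x0)) + ereal (s^2 / (2*\<gamma>))" by simp
    also have "\<dots> \<le> g y + ereal (s^2 / (2*\<gamma>))" using lb[of y] by (rule add_right_mono)
    finally show ?thesis by (simp add: s_def)
  qed
  then have "ereal L \<le> moreau_env \<gamma> g u" unfolding moreau_env_def by (rule INF_greatest)
  then show ?thesis by auto
qed


theorem lemma5p8:
  fixes A :: "real^'n^'n" and b :: "real^'n" and \<alpha> :: real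
    and g :: "real^'n \<Rightarrow> ereal" and \<gamma> :: real
    and Q P :: "real^'n^'n" and c :: "real^'n"
    and \<psi> \<phi> :: "real^'n \<Rightarrow> ereal" and xbar :: "real^'n"
  assumes symA: "transpose A = A"
    and psdA: "pos_semidef A"
    and g_proper: "proper_fun g"
    and g_lsc: "lsc_fun g"
    and g_convex: "ereal_convex_fun g"
    and gamma_pos: "\<gamma> > 0"
    and pd: "pos_def (mat 1 - \<gamma> *\<^sub>R A)"
    and Q_def: "Q = matrix_inv (mat 1 - \<gamma> *\<^sub>R A)"
    and c_def: "c = \<gamma> *\<^sub>R (Q *v b)"
    and P_def: "P = Q - mat 1"
    and psi_def: "\<psi> = (\<lambda>u. ereal (1/2 * ((P *v u) \<bullet> u) + c \<bullet> u) + ereal \<gamma> * moreau_env \<gamma> g u)"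
    and phi_def: "\<phi> = (\<lambda>x. ereal (1/2 * ((A *v x) \<bullet> x) + b \<bullet> x + \<alpha>) + g x)"
  shows "(\<forall>x. \<phi> xbar \<le> \<phi> x) \<longleftrightarrow>
         (\<exists>ubar. (\<forall>u. \<psi> ubar \<le> \<psi> u) \<and> xbar = Q *v ubar + c)"
proof -
  define M where "M = mat 1 - \<gamma> *\<^sub>R A"
  have "\<forall>x. M *v x = 0 \<longrightarrow> x = 0"
  proof (intro allI impI)
    fix x assume "M *v x = 0"
    then have "x \<bullet> (M *v x) = 0" by simp
    then show "x = 0" using pd unfolding pos_def_def M_def by (metis less_irrefl)
  qed
  then have "\<exists>B. B ** M = mat 1" using matrix_left_invertible_ker by blast
  then have "invertible M" using invertible_left_inverse by blast
  then have "\<exists>A'. M ** A' = mat 1 \<and> A' ** M = mat 1" unfolding invertible_def by blast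
  then have QM1: "M ** Q = mat 1 \<and> Q ** M = mat 1"
    unfolding Q_def M_def[symmetric] matrix_inv_def by (rule someI_ex)
  have MQ: "\<And>v. M *v (Q *v v) = v" using QM1 by (simp add: matrix_vector_mul_assoc)
  have QM: "\<And>v. Q *v (M *v v) = v" using QM1 by (simp add: matrix_vector_mul_assoc)
  have sym: "\<And>x z. (A *v x) \<bullet> z = x \<bullet> (A *v z)"
  proof -
    fix x z
    have "(A *v x) \<bullet> z = (x v* transpose A) \<bullet> z" by simp
    also have "\<dots> = x \<bullet> (transpose A *v z)" by (rule dot_lmul_matrix)
    finally show "(A *v x) \<bullet> z = x \<bullet> (A *v z)" using symA by simp
  qed
  have Mv: "\<And>v. M *v v = v - \<gamma> *\<^sub>R (A *v v)"
    by (simp add: M_def matrix_vector_mult_diff_rdistrib scaleR_matrix_vector_assoc)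
  have Mc: "M *v c = \<gamma> *\<^sub>R b" unfolding c_def by (simp add: matrix_vector_mult_scaleR MQ)
  have bc: "\<And>y. \<gamma> * (b \<bullet> y) = c \<bullet> y - \<gamma> * ((A *v c) \<bullet> y)"
  proof -
    fix y
    have "(\<gamma> *\<^sub>R b) \<bullet> y = (c - \<gamma> *\<^sub>R (A *v c)) \<bullet> y" using Mc Mv[of c] by simp
    then show "\<gamma> * (b \<bullet> y) = c \<bullet> y - \<gamma> * ((A *v c) \<bullet> y)" by (simp add: inner_simps)
  qed
  define h where "h = (\<lambda>y. 1/2 * ((A *v y) \<bullet> y) + b \<bullet> y + \<alpha>)"
  define r where "r = (\<lambda>u. 1/2 * ((P *v u) \<bullet> u) + c \<bullet> u)"
  define K where "K = \<gamma>/2*((A*v c)\<bullet>c) - 1/2*(c\<bullet>c) - \<gamma>*\<alpha>"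
  define R where "R = (\<lambda>u y. 1/2 * ((Q *v u + c - y) \<bullet> (M *v (Q *v u + c - y))))"
  have key: "\<And>u y. r u + norm (y - u)^2 / 2 = \<gamma> * h y + K + R u y"
  proof -
    fix u y
    have u: "u = Q *v u - \<gamma> *\<^sub>R (A *v (Q *v u))" using MQ[of u] Mv[of "Q *v u"] by simp
    have Pu: "P *v u = Q *v u - u" by (simp add: P_def matrix_vector_mult_diff_rdistrib)
    show "r u + norm (y - u)^2 / 2 = \<gamma> * h y + K + R u y"
      unfolding r_def h_def K_def R_def Mv
      by (rule ident[OF sym bc u Pu refl])
  qed
  have phi_eq: "\<And>y. \<phi> y = ereal (h y) + g y" by (simp add: phi_def h_def)
  have psi_eq: "\<And>u. \<psi> u = ereal (r u) + ereal \<gamma> * (INF y. g y + ereal (norm (y - u) ^ 2 / (2 * \<gamma>)))"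
    by (simp add: psi_def r_def moreau_env_def)
  have gnm: "\<And>y. g y \<noteq> -\<infinity>" using g_proper unfolding proper_fun_def by blast
  have Phi_eq: "\<And>u y. ereal (r u) + ereal \<gamma> * (g y + ereal (norm (y - u) ^ 2 / (2 * \<gamma>)))
      = ereal \<gamma> * \<phi> y + ereal (K + R u y)"
  proof -
    fix u y
    have k: "r u + \<gamma> * (norm (y - u) ^ 2 / (2 * \<gamma>)) = \<gamma> * h y + K + R u y"
      using key[of u y] gamma_pos by simp
    show "ereal (r u) + ereal \<gamma> * (g y + ereal (norm (y - u) ^ 2 / (2 * \<gamma>)))
      = ereal \<gamma> * \<phi> y + ereal (K + R u y)"
    proof (cases "g y")
      case (real v)
      then show ?thesis using k unfolding phi_eq by (simp add: algebra_simps)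
    next
      case PInf then show ?thesis using gamma_pos unfolding phi_eq by simp
    next
      case MInf then show ?thesis using gnm by simp
    qed
  qed
  obtain \<mu> where mupos: "\<mu> > 0" and mu: "\<And>d. \<mu> * (norm d)^2 \<le> d \<bullet> (M *v d)"
    using mu_lemma[of M] pd unfolding M_def by blast
  have Rnn: "\<And>u y. 0 \<le> R u y"
  proof -
    fix u y
    have "0 \<le> \<mu> * (norm (Q *v u + c - y))^2" using mupos by simp
    then show "0 \<le> R u y" unfolding R_def using mu[of "Q *v u + c - y"] by linarith
  qed
  have Rmu: "\<And>u y. \<mu>/2 * (norm (Q *v u + c - y))^2 \<le> R u y"
    unfolding R_def using mu by (simp add: field_simps)
  have R0: "\<And>x. R (M *v (x - c)) x = 0" unfolding R_def by (simp add: QM)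
  have QMx: "\<And>x. Q *v (M *v (x - c)) + c = x" by (simp add: QM)
  have psi_le_Phi: "\<And>u y. \<psi> u \<le> ereal \<gamma> * \<phi> y + ereal (K + R u y)"
    unfolding psi_eq Phi_eq[symmetric] using gamma_pos by (rule psi_le)
  have psi_ge_Phi: "\<And>u L. (\<And>y. ereal L \<le> ereal \<gamma> * \<phi> y + ereal (K + R u y)) \<Longrightarrow> ereal L \<le> \<psi> u"
    unfolding psi_eq Phi_eq[symmetric] using gamma_pos by (rule psi_ge)
  have psi_at: "\<And>x. \<psi> (M *v (x - c)) \<le> ereal \<gamma> * \<phi> x + ereal K"
    using psi_le_Phi R0 by (metis add_0_right)
  show ?thesis
  proof
    assume H: "\<forall>x. \<phi> xbar \<le> \<phi> x"
    define ubar where "ubar = M *v (xbar - c)"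
    obtain x1 where x1: "g x1 \<noteq> \<infinity>" using g_proper unfolding proper_fun_def by blast
    have "\<phi> xbar \<le> \<phi> x1" using H by blast
    moreover have "\<phi> x1 \<noteq> \<infinity>" using x1 phi_eq[of x1] by simp
    ultimately have "\<phi> xbar \<noteq> \<infinity>" by auto
    moreover have "\<phi> xbar \<noteq> -\<infinity>" using gnm[of xbar] phi_eq[of xbar] by simp
    ultimately obtain p where p: "\<phi> xbar = ereal p" by (cases "\<phi> xbar") auto
    have "\<forall>u. \<psi> ubar \<le> \<psi> u"
    proof
      fix u
      have "\<psi> ubar \<le> ereal (\<gamma> * p + K)" using psi_at[of xbar] p unfolding ubar_def by simp
      also have "ereal (\<gamma> * p + K) \<le> \<psi> u"
      proof (rule psi_ge_Phi)
        fix y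
        have "ereal \<gamma> * ereal p \<le> ereal \<gamma> * \<phi> y"
          using H p gamma_pos by (metis ereal_mult_left_mono ereal_less_eq(5) less_imp_le)
        moreover have "ereal K \<le> ereal (K + R u y)" using Rnn[of u y] by simp
        ultimately have "ereal \<gamma> * ereal p + ereal K \<le> ereal \<gamma> * \<phi> y + ereal (K + R u y)"
          by (rule add_mono)
        then show "ereal (\<gamma> * p + K) \<le> ereal \<gamma> * \<phi> y + ereal (K + R u y)" by simp
      qed
      finally show "\<psi> ubar \<le> \<psi> u" .
    qed
    moreover have "xbar = Q *v ubar + c" unfolding ubar_def by (simp add: QMx)
    ultimately show "\<exists>ubar. (\<forall>u. \<psi> ubar \<le> \<psi> u) \<and> xbar = Q *v ubar + c" by blast
  next
    assume "\<exists>ubar. (\<forall>u. \<psi> ubar \<le> \<psi> u) \<and> xbar = Q *v ubar + c"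
    then obtain ubar where Hmin: "\<And>u. \<psi> ubar \<le> \<psi> u" and xb: "xbar = Q *v ubar + c" by blast
    have B: "\<And>y. \<psi> ubar \<le> ereal \<gamma> * \<phi> y + ereal K"
      using Hmin psi_at order_trans by blast
    show "\<forall>x. \<phi> xbar \<le> \<phi> x"
    proof (rule ccontr)
      assume "\<not> (\<forall>x. \<phi> xbar \<le> \<phi> x)"
      then obtain x where lt: "\<phi> x < \<phi> xbar" by (meson not_le)
      have "\<phi> x \<noteq> \<infinity>" using lt by auto
      moreover have "\<phi> x \<noteq> -\<infinity>" using gnm[of x] phi_eq[of x] by simp
      ultimately obtain px where px: "\<phi> x = ereal px" by (cases "\<phi> x") auto
      have "moreau_env \<gamma> g ubar \<noteq> -\<infinity>"
        by (rule moreau_finite_below[OF g_proper g_lsc g_convex gamma_pos])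
      then have "\<psi> ubar \<noteq> -\<infinity>" using gamma_pos unfolding psi_def
        by (cases "moreau_env \<gamma> g ubar") auto
      moreover have "\<psi> ubar \<le> ereal (\<gamma> * px + K)" using B[of x] px by simp
      ultimately obtain m where m: "\<psi> ubar = ereal m" and mle: "m \<le> \<gamma> * px + K"
        by (cases "\<psi> ubar") auto
      obtain t where t1: "\<phi> x < ereal t" and t2: "ereal t < \<phi> xbar" using lt ereal_dense2 by blast
      have hc: "isCont h xbar" unfolding h_def
        by (intro continuous_intros linear_continuous_at matrix_vector_mul_bounded_linear)
      obtain \<delta> where dpos: "\<delta> > 0" and near: "\<And>y. dist y xbar < \<delta> \<Longrightarrow> ereal t < \<phi> y"
        using lsc_nbhd[OF g_lsc hc, of t] t2 unfolding phi_eq by blast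
      define L where "L = min (m + \<mu>/2 * \<delta>^2) (\<gamma> * t + K)"
      have "ereal L \<le> \<psi> ubar"
      proof (rule psi_ge_Phi)
        fix y
        show "ereal L \<le> ereal \<gamma> * \<phi> y + ereal (K + R ubar y)"
        proof (cases "dist y xbar < \<delta>")
          case True
          have "ereal \<gamma> * ereal t \<le> ereal \<gamma> * \<phi> y"
            using near[OF True] gamma_pos by (metis ereal_mult_left_mono ereal_less_eq(5) less_imp_le)
          moreover have "ereal K \<le> ereal (K + R ubar y)" using Rnn[of ubar y] by simp
          ultimately have "ereal \<gamma> * ereal t + ereal K \<le> ereal \<gamma> * \<phi> y + ereal (K + R ubar y)"
            by (rule add_mono)
          moreover have "L \<le> \<gamma> * t + K" unfolding L_def by simp
          ultimately show ?thesis by (metis ereal_less_eq(3) order_trans times_ereal.simps(1) plus_ereal.simps(1))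
        next
          case False
          have "\<delta>^2 \<le> (norm (Q *v ubar + c - y))^2"
            using False dpos xb by (simp add: dist_norm norm_minus_commute power_mono)
          then have "\<mu>/2 * \<delta>^2 \<le> R ubar y" using Rmu[of ubar y] mupos
            by (meson mult_left_mono half_gt_zero less_imp_le order_trans)
          then have "ereal (m + \<mu>/2 * \<delta>^2) \<le> ereal m + ereal (R ubar y)" by simp
          also have "\<dots> \<le> (ereal \<gamma> * \<phi> y + ereal K) + ereal (R ubar y)"
            using B[of y] m by (intro add_right_mono) simp
          also have "\<dots> = ereal \<gamma> * \<phi> y + ereal (K + R ubar y)"
            by (simp add: add.assoc)
          finally show ?thesis unfolding L_def
            by (meson ereal_less_eq(3) min.cobounded1 order_trans)
        qed
      qed
      then have "L \<le> m" using m by simp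
      moreover have "m < m + \<mu>/2 * \<delta>^2" using mupos dpos by simp
      ultimately have "\<gamma> * t + K \<le> m" unfolding L_def by linarith
      moreover have "px < t" using t1 px by simp
      then have "\<gamma> * px < \<gamma> * t" using gamma_pos by simp
      ultimately show False using mle by linarith
    qed
  qed
qed

end
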